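(* Let $\mu\in(0,1)$ and let $\beta:[0,\infty)\to(0,\infty)$ be positive, bounded, non-increasing with $\lim_{a\to\infty}a\beta(a)=\mu$. Let $B(a)=\int_0^a\beta(s)\,ds$ and $W(\tau,b)=C(\tau)e^{-B(e^{\tau}b)}(1-b)^{\mu-1}$ for $\tau\ge0$, $b\in[0,1)$, with $C(\tau)>0$ such that $\int_0^1W(\tau,b)\,db=1$. Define $\delta(\tau)=\frac{C'(\tau)}{C(\tau)^2}-\frac{\mu}{C(\tau)}$. Then $W$ satisfies $$\partial_\tau W(\tau,b)+\partial_b((1-b)W(\tau,b))+e^{\tau}\beta(e^{\tau}b)W(\tau,b)=W(\tau,b)C(\tau)\delta(\tau),$$ $$W(\tau,0)(1+\delta(\tau))=\int_0^1e^{\tau}\beta(e^{\tau}b)W(\tau,b)\,db.$$ *)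

theory Defs
  imports "HOL-Analysis.Analysis"
begin

end

theory Submission
  imports Defs "HOL-Analysis.Analysis"
begin


lemma exp_neg_lip:
  fixes u v :: real assumes "0 \<le> u" "u \<le> v"
  shows "0 \<le> exp (-u) - exp (-v) \<and> exp (-u) - exp (-v) \<le> v - u"
proof -
  have "exp (-u) - exp (-v) = exp (-u) * (1 - exp (-(v-u)))"
    by (simp add: algebra_simps flip: exp_add)
  moreover have "1 - exp (-(v-u)) \<le> v - u" using exp_ge_add_one_self[of "-(v-u)"] by linarith
  moreover have "0 \<le> 1 - exp (-(v-u))" using assms by simp
  moreover have "exp (-u) \<le> 1" using assms by simp
  ultimately show ?thesis
    by (metis (no_types, lifting) dual_order.trans exp_ge_zero mult_left_le_one_le mult_nonneg_nonneg)
qed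

lemma exp_lip:
  fixes t s :: real assumes "t \<le> s"
  shows "0 \<le> exp s - exp t \<and> exp s - exp t \<le> exp s * (s - t)"
proof -
  have "exp s - exp t = exp s * (1 - exp (-(s-t)))"
    by (simp add: algebra_simps flip: exp_add)
  moreover have "1 - exp (-(s-t)) \<le> s - t" using exp_ge_add_one_self[of "-(s-t)"] by linarith
  moreover have "0 \<le> 1 - exp (-(s-t))" using assms by simp
  ultimately show ?thesis by (simp add: mult_left_mono)
qed

lemma borel_lebesgue_on:
  "f \<in> borel_measurable borel \<Longrightarrow> f \<in> borel_measurable (lebesgue_on S)"
  by (intro measurable_restrict_space1) (simp add: measurable_completion)

locale prop2_setup =
  fixes \<mu> M :: real and \<beta> B C :: "real \<Rightarrow> real" and W :: "real \<Rightarrow> real \<Rightarrow> real"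
  assumes mu0: "0 < \<mu>" and mu1: "\<mu> < 1"
    and beta_pos: "\<And>a. 0 \<le> a \<Longrightarrow> 0 < \<beta> a"
    and beta_M: "\<And>a. 0 \<le> a \<Longrightarrow> \<beta> a \<le> M"
    and beta_noninc: "\<And>x y. 0 \<le> x \<Longrightarrow> x \<le> y \<Longrightarrow> \<beta> y \<le> \<beta> x"
    and B_def: "\<And>a. 0 \<le> a \<Longrightarrow> B a = integral {0..a} \<beta>"
    and W_def: "\<And>\<tau> b. 0 \<le> \<tau> \<Longrightarrow> 0 \<le> b \<Longrightarrow> b < 1 \<Longrightarrow>
                  W \<tau> b = C \<tau> * exp (- B (exp \<tau> * b)) * (1 - b) powr (\<mu> - 1)"
    and C_pos: "\<And>\<tau>. 0 \<le> \<tau> \<Longrightarrow> 0 < C \<tau>"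
    and C_norm: "\<And>\<tau>. 0 \<le> \<tau> \<Longrightarrow> ((\<lambda>b. W \<tau> b) has_integral 1) {0..1}"
begin

definition h where "h y = exp (- B y)"

lemma M_pos: "0 < M" using beta_pos[of 0] beta_M[of 0] by simp

lemma beta_int: assumes "0 \<le> x" shows "\<beta> integrable_on {x..y}"
proof -
  have "mono_on {x..y} (\<lambda>t. - \<beta> t)"
    using assms by (auto simp: mono_on_def intro: beta_noninc)
  hence "(\<lambda>t. - \<beta> t) integrable_on {x..y}" by (rule integrable_on_mono_on)
  hence "(\<lambda>t. - (- \<beta> t)) integrable_on {x..y}" by (rule integrable_neg)
  thus ?thesis by simp
qed

lemma B_diff: assumes "0 \<le> x" "x \<le> y" shows "B y - B x = integral {x..y} \<beta>"
proof -
  have "integral {0..x} \<beta> + integral {x..y} \<beta> = integral {0..y} \<beta>"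
    using assms Henstock_Kurzweil_Integration.integral_combine[where a=0 and c=x and b=y and f=\<beta>] beta_int[of 0 y] by auto
  thus ?thesis using assms B_def[of x] B_def[of y] by simp
qed

lemma B_lip: assumes "0 \<le> x" "x \<le> y" shows "0 \<le> B y - B x" "B y - B x \<le> M * (y - x)"
proof -
  show "0 \<le> B y - B x" unfolding B_diff[OF assms]
    using assms by (intro integral_nonneg beta_int) (auto intro!: less_imp_le[OF beta_pos])
  have "integral {x..y} \<beta> \<le> integral {x..y} (\<lambda>_. M)"
    using assms by (intro integral_le beta_int) (auto intro: beta_M)
  thus "B y - B x \<le> M * (y - x)" unfolding B_diff[OF assms] using assms by (simp add: mult.commute)
qed

lemma B0: "B 0 = 0" using B_def[of 0] by simp

lemma B_nonneg: "0 \<le> y \<Longrightarrow> 0 \<le> B y" using B_lip(1)[of 0 y] B0 by simp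

lemma h_pos: "0 < h y" unfolding h_def by simp
lemma h_le1: "0 \<le> y \<Longrightarrow> h y \<le> 1" unfolding h_def using B_nonneg by simp
lemma h0: "h 0 = 1" unfolding h_def using B0 by simp

lemma h_lip: assumes "0 \<le> x" "0 \<le> y" shows "\<bar>h y - h x\<bar> \<le> M * \<bar>y - x\<bar>"
proof -
  have *: "\<bar>h y - h x\<bar> \<le> M * \<bar>y - x\<bar>" if "0 \<le> x" "x \<le> y" for x y
  proof -
    have "0 \<le> h x - h y \<and> h x - h y \<le> B y - B x"
      unfolding h_def using exp_neg_lip[of "B x" "B y"] B_nonneg[of x] B_lip[of x y] that by simp
    thus ?thesis using B_lip[OF that] that by simp
  qed
  show ?thesis using *[of x y] *[of y x] assms by (cases "x \<le> y") (auto simp: abs_minus_commute)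
qed

lemma h_cont: "continuous_on {0..} h"
proof (rule continuous_onI)
  fix x e :: real assume x: "x \<in> {0..}" and e: "0 < e"
  show "\<exists>d>0. \<forall>x'\<in>{0..}. dist x' x < d \<longrightarrow> dist (h x') (h x) \<le> e"
  proof (intro exI[of _ "e / M"] conjI ballI impI)
    show "0 < e / M" using e M_pos by simp
    fix y assume y: "y \<in> {0..}" "dist y x < e / M"
    have "\<bar>h y - h x\<bar> \<le> M * \<bar>y - x\<bar>" using h_lip x y by auto
    also have "\<dots> \<le> e" using y M_pos by (simp add: dist_real_def field_simps)
    finally show "dist (h y) (h x) \<le> e" by (simp add: dist_real_def)
  qed
qed

lemma B_deriv: assumes y: "0 \<le> y" and c: "continuous (at y within {0..}) \<beta>"
  shows "(B has_real_derivative \<beta> y) (at y within {0..})"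
proof -
  have eq: "at y within {0..} = at y within {0..y+1}"
    by (rule at_within_nhd[of _ "{..<y+1}"]) auto
  have "((\<lambda>u. integral {0..u} \<beta>) has_vector_derivative \<beta> y) (at y within {0..y+1} - {})"
    using y c eq by (intro integral_has_vector_derivative_continuous_at beta_int) auto
  hence "((\<lambda>u. integral {0..u} \<beta>) has_real_derivative \<beta> y) (at y within {0..y+1})"
    by (simp add: has_real_derivative_iff_has_vector_derivative)
  hence "(B has_real_derivative \<beta> y) (at y within {0..y+1})"
    by (rule has_field_derivative_transform_within[where d=1]) (use y B_def in auto)
  thus ?thesis using eq by simp
qed

lemma h_deriv: assumes y: "0 \<le> y" and c: "continuous (at y within {0..}) \<beta>"
  shows "(h has_real_derivative - \<beta> y * h y) (at y within {0..})"
  unfolding h_def[abs_def]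
  using B_deriv[OF assms] by (auto intro!: derivative_eq_intros)

definition D where "D = {y \<in> {0..}. \<not> continuous (at y within {0..}) \<beta>}"

lemma D_countable: "countable D"
proof -
  have "mono_on {0..} (\<lambda>t. - \<beta> t)" by (auto simp: mono_on_def intro: beta_noninc)
  from mono_on_ctble_discont[OF this] show ?thesis
    unfolding D_def
    by (rule countable_subset[rotated]) (auto dest: continuous_minus)
qed

definition bt where "bt x = \<beta> (max 0 x)"

lemma bt_meas: "bt \<in> borel_measurable borel"
proof -
  have "mono (\<lambda>x. - bt x)" unfolding bt_def mono_def by (auto intro: beta_noninc)
  hence "(\<lambda>x. - bt x) \<in> borel_measurable borel" by (rule borel_measurable_mono)
  hence "(\<lambda>x. - (- bt x)) \<in> borel_measurable borel" by measurable
  thus ?thesis by simp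
qed

end



lemma P_int: "(\<lambda>b::real. (1-b) powr a) integrable_on {0..1}" if "a > -1"
proof -
  have "(\<lambda>x::real. x powr a) integrable_on cbox 0 1" using integrable_on_powr_from_0[OF that, of 1] by simp
  from integrable_affinity[OF this, of "-1" 1]
  have "(\<lambda>x. (-x + 1) powr a) integrable_on (\<lambda>x. - x + 1) ` cbox 0 1" by simp
  moreover have "(\<lambda>x::real. - x + 1) ` cbox 0 1 = {0..1}"
    by (auto simp: image_iff intro!: bexI[where x="1 - x" for x])
  ultimately show ?thesis by (simp add: add.commute)
qed

lemma P_absint: "(\<lambda>b::real. (1-b) powr a) absolutely_integrable_on {0..1}" if "a > -1"
  by (rule nonnegative_absolutely_integrable_1[OF P_int[OF that]]) auto

lemma bm_int:
  fixes f :: "real \<Rightarrow> real"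
  assumes "f \<in> borel_measurable (lebesgue_on {0..1})" "\<And>b. b \<in> {0..1} \<Longrightarrow> \<bar>f b\<bar> \<le> K" "a > -1"
  shows "(\<lambda>b. f b * (1-b) powr a) integrable_on {0..1}"
proof -
  have "bounded (f ` {0..1})" using assms(2) unfolding bounded_iff by (intro exI[of _ K]) auto
  hence "(\<lambda>b. f b * (1-b) powr a) absolutely_integrable_on {0..1}"
    using assms by (intro absolutely_integrable_bounded_measurable_product_real P_absint) auto
  thus ?thesis using absolutely_integrable_on_def by blast
qed

context prop2_setup begin

lemma hb_meas: "(\<lambda>b. h (exp \<tau> * b)) \<in> borel_measurable (lebesgue_on {0..1})"
proof -
  have "continuous_on {0..1} (\<lambda>b. h (exp \<tau> * b))"
    by (rule continuous_on_compose2[OF h_cont]) (auto intro!: continuous_intros)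
  thus ?thesis by (intro continuous_imp_measurable_on_sets_lebesgue) auto
qed

lemma bb_meas: "(\<lambda>b. bt (exp \<tau> * b)) \<in> borel_measurable (lebesgue_on {0..1})"
  by (intro borel_lebesgue_on measurable_compose[OF _ bt_meas]) measurable

lemma id_meas: "(\<lambda>b::real. b) \<in> borel_measurable (lebesgue_on {0..1})"
  by (intro borel_lebesgue_on) measurable

lemma int_I: "(\<lambda>b. h (exp \<tau> * b) * (1-b) powr (\<mu>-1)) integrable_on {0..1}"
  by (rule bm_int[OF hb_meas, where K=1]) (use mu0 h_pos h_le1 in \<open>auto simp: less_imp_le\<close>)

lemma int_J1: "(\<lambda>b. exp \<tau> * b * \<beta> (exp \<tau> * b) * h (exp \<tau> * b) * (1-b) powr (\<mu>-1)) integrable_on {0..1}"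
proof -
  have "(\<lambda>b. (exp \<tau> * b * bt (exp \<tau> * b) * h (exp \<tau> * b)) * (1-b) powr (\<mu>-1)) integrable_on {0..1}"
  proof (rule bm_int[where K = "exp \<tau> * M"])
    show "(\<lambda>b. exp \<tau> * b * bt (exp \<tau> * b) * h (exp \<tau> * b)) \<in> borel_measurable (lebesgue_on {0..1})"
      using hb_meas bb_meas id_meas by measurable
    fix b :: real assume b: "b \<in> {0..1}"
    have "0 \<le> bt (exp \<tau> * b)" "bt (exp \<tau> * b) \<le> M" unfolding bt_def
      using beta_pos[of "max 0 (exp \<tau> * b)"] beta_M[of "max 0 (exp \<tau> * b)"] by auto
    moreover have "0 < h (exp \<tau> * b)" "h (exp \<tau> * b) \<le> 1" using h_pos h_le1 b by auto
    ultimately have "b * bt (exp \<tau> * b) * h (exp \<tau> * b) \<le> 1 * M * 1"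
      using b by (intro mult_mono) auto
    moreover have "0 \<le> b * bt (exp \<tau> * b) * h (exp \<tau> * b)" using b \<open>0 \<le> bt _\<close> h_pos
      by (simp add: less_imp_le)
    ultimately show "\<bar>exp \<tau> * b * bt (exp \<tau> * b) * h (exp \<tau> * b)\<bar> \<le> exp \<tau> * M"
      by (simp add: abs_mult mult.assoc mult_left_mono)
  qed (use mu0 in auto)
  thus ?thesis by (rule integrable_eq) (auto simp: bt_def)
qed

end



lemma countable_negligible: "countable A \<Longrightarrow> negligible (A :: real set)"
proof -
  assume A: "countable A"
  have "A = \<Union> ((\<lambda>y. {y}) ` A)" by auto
  moreover have "negligible (\<Union> ((\<lambda>y. {y}) ` A))"
    using A by (intro negligible_countable_Union) auto
  ultimately show ?thesis by simp
qed

context prop2_setup begin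

lemma int_gen:
  assumes "f \<in> borel_measurable (lebesgue_on {0..1})" "\<And>b. b \<in> {0..1} \<Longrightarrow> \<bar>f b\<bar> \<le> K" "a > -1"
  shows "(\<lambda>b. exp \<tau> * \<beta> (exp \<tau> * b) * h (exp \<tau> * b) * f b * (1-b) powr a) integrable_on {0..1}"
proof -
  have "(\<lambda>b. (exp \<tau> * bt (exp \<tau> * b) * h (exp \<tau> * b) * f b) * (1-b) powr a) integrable_on {0..1}"
  proof (rule bm_int[where K = "exp \<tau> * M * K"])
    show "(\<lambda>b. exp \<tau> * bt (exp \<tau> * b) * h (exp \<tau> * b) * f b) \<in> borel_measurable (lebesgue_on {0..1})"
      using hb_meas bb_meas assms(1) by measurable
    fix b :: real assume b: "b \<in> {0..1}"
    have "0 \<le> bt (exp \<tau> * b)" "bt (exp \<tau> * b) \<le> M" unfolding bt_def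
      using beta_pos[of "max 0 (exp \<tau> * b)"] beta_M[of "max 0 (exp \<tau> * b)"] by auto
    moreover have "0 < h (exp \<tau> * b)" "h (exp \<tau> * b) \<le> 1" using h_pos h_le1 b by auto
    ultimately have "bt (exp \<tau> * b) * h (exp \<tau> * b) * \<bar>f b\<bar> \<le> M * 1 * K"
      using b assms(2)[OF b] by (intro mult_mono) auto
    moreover have "0 \<le> bt (exp \<tau> * b) * h (exp \<tau> * b)" using \<open>0 \<le> bt _\<close> h_pos
      by (simp add: less_imp_le)
    moreover have "\<bar>bt (exp \<tau> * b)\<bar> = bt (exp \<tau> * b)" "\<bar>h (exp \<tau> * b)\<bar> = h (exp \<tau> * b)"
      using \<open>0 \<le> bt _\<close> h_pos[of "exp \<tau> * b"] by auto
    ultimately show "\<bar>exp \<tau> * bt (exp \<tau> * b) * h (exp \<tau> * b) * f b\<bar> \<le> exp \<tau> * M * K"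
      by (simp add: abs_mult mult.assoc mult_left_mono)
  qed (use assms in auto)
  thus ?thesis by (rule integrable_eq) (auto simp: bt_def)
qed

lemma I_deriv:
  assumes tau: "0 \<le> \<tau>"
  shows "((\<lambda>t. integral {0..1} (\<lambda>b. h (exp t * b) * (1-b) powr (\<mu>-1))) has_real_derivative
          - integral {0..1} (\<lambda>b. exp \<tau> * \<beta> (exp \<tau> * b) * h (exp \<tau> * b) * b * (1-b) powr (\<mu>-1)))
         (at \<tau> within {0..})"
proof -
  define I where "I t = integral {0..1} (\<lambda>b. h (exp t * b) * (1-b) powr (\<mu>-1))" for t
  define g where "g b = - (exp \<tau> * \<beta> (exp \<tau> * b) * h (exp \<tau> * b) * b * (1-b) powr (\<mu>-1))" for b
  define E where "E = (\<lambda>y. y / exp \<tau>) ` D \<union> {1}"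
  have negE: "negligible E" unfolding E_def
    by (intro countable_negligible) (use D_countable in auto)
  have g_int: "g integrable_on {0..1}" unfolding g_def
    by (intro integrable_neg int_gen[where K=1] id_meas) (use mu0 in auto)
  have intg: "integral {0..1} g = - integral {0..1} (\<lambda>b. exp \<tau> * \<beta> (exp \<tau> * b) * h (exp \<tau> * b) * b * (1-b) powr (\<mu>-1))"
    unfolding g_def by (rule integral_neg)
  have "((\<lambda>t. (I t - I \<tau>) / (t - \<tau>)) \<longlongrightarrow> integral {0..1} g) (at \<tau> within {0..})"
    unfolding tendsto_at_iff_sequentially
  proof (intro allI impI)
    fix X :: "nat \<Rightarrow> real" assume X: "\<forall>i. X i \<in> {0..} - {\<tau>}" and Xlim: "X \<longlonglongrightarrow> \<tau>"
    obtain T0 where T0: "\<And>i. norm (X i) \<le> T0" using convergent_imp_Bseq[OF convergentI[OF Xlim]] by (metis BseqE)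
    define T where "T = max T0 \<tau>"
    have XT: "X i \<le> T" for i using T0[of i] by (auto simp: T_def)
    define f where "f k b = (h (exp (X k) * b) * (1-b) powr (\<mu>-1) - h (exp \<tau> * b) * (1-b) powr (\<mu>-1)) / (X k - \<tau>)" for k b
    define f' where "f' k b = (if b \<in> E then g b else f k b)" for k b
    define H where "H b = M * exp T * (1-b) powr (\<mu>-1)" for b
    have f_int: "f k integrable_on {0..1}" for k unfolding f_def
      by (intro integrable_on_divide integrable_diff int_I)
    have f'_int: "f' k integrable_on {0..1}" for k
      by (rule integrable_spike[OF f_int negE]) (auto simp: f'_def)
    have f'_eq: "integral {0..1} (f' k) = (I (X k) - I \<tau>) / (X k - \<tau>)" for k
    proof -
      have "integral {0..1} (f' k) = integral {0..1} (f k)"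
        by (rule integral_spike[OF negE]) (auto simp: f'_def)
      also have "\<dots> = (I (X k) - I \<tau>) / (X k - \<tau>)" unfolding f_def I_def
        by (simp add: integral_divide integral_diff int_I)
      finally show ?thesis .
    qed
    have H_int: "H integrable_on {0..1}" unfolding H_def
      using integrable_on_cmult_left[where c="M * exp T", OF P_int[of "\<mu>-1"]] mu0 by simp
    have bound_f: "norm (f k b) \<le> H b" if b: "b \<in> {0..1}" for k b
    proof -
      have ne: "X k \<noteq> \<tau>" "0 \<le> X k" using X by auto
      have "\<bar>h (exp (X k) * b) - h (exp \<tau> * b)\<bar> \<le> M * \<bar>exp (X k) * b - exp \<tau> * b\<bar>"
        using b ne by (intro h_lip) auto
      also have "\<bar>exp (X k) * b - exp \<tau> * b\<bar> = b * \<bar>exp (X k) - exp \<tau>\<bar>"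
      proof -
        have "exp (X k) * b - exp \<tau> * b = b * (exp (X k) - exp \<tau>)" by (simp add: algebra_simps)
        thus ?thesis using b by (simp add: abs_mult)
      qed
      also have "\<bar>exp (X k) - exp \<tau>\<bar> \<le> exp T * \<bar>X k - \<tau>\<bar>"
      proof (cases "X k \<le> \<tau>")
        case True
        have "exp \<tau> \<le> exp T" by (simp add: T_def)
        hence "exp \<tau> * (\<tau> - X k) \<le> exp T * (\<tau> - X k)" using True by (intro mult_right_mono) auto
        then show ?thesis using exp_lip[OF True] True by (simp add: abs_minus_commute)
      next
        case False
        have "exp (X k) \<le> exp T" using XT[of k] by simp
        hence "exp (X k) * (X k - \<tau>) \<le> exp T * (X k - \<tau>)" using False by (intro mult_right_mono) auto
        moreover have "\<bar>exp (X k) - exp \<tau>\<bar> = exp (X k) - exp \<tau>" using False by simp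
        ultimately show ?thesis using exp_lip[of \<tau> "X k"] False by linarith
      qed
      finally have "\<bar>h (exp (X k) * b) - h (exp \<tau> * b)\<bar> \<le> M * (b * (exp T * \<bar>X k - \<tau>\<bar>))"
        using b M_pos by (smt (verit, best) atLeastAtMost_iff mult_left_mono)
      also have "\<dots> \<le> M * exp T * \<bar>X k - \<tau>\<bar>"
        using b M_pos by (simp add: mult_le_cancel_left1 mult.assoc mult_left_le_one_le)
      finally have 1: "\<bar>h (exp (X k) * b) - h (exp \<tau> * b)\<bar> / \<bar>X k - \<tau>\<bar> \<le> M * exp T"
        using ne by (simp add: divide_le_eq)
      have "norm (f k b) = \<bar>h (exp (X k) * b) - h (exp \<tau> * b)\<bar> / \<bar>X k - \<tau>\<bar> * (1-b) powr (\<mu>-1)"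
        unfolding f_def by (simp add: abs_mult left_diff_distrib[symmetric])
      also have "\<dots> \<le> H b" unfolding H_def using 1 by (intro mult_right_mono) auto
      finally show ?thesis .
    qed
    have bound_g: "norm (g b) \<le> H b" if b: "b \<in> {0..1}" for b
    proof -
      have "\<beta> (exp \<tau> * b) * h (exp \<tau> * b) * b \<le> M * 1 * 1"
        using b beta_M[of "exp \<tau> * b"] beta_pos[of "exp \<tau> * b"] h_pos[of "exp \<tau> * b"] h_le1[of "exp \<tau> * b"]
        by (intro mult_mono) auto
      moreover have "exp \<tau> \<le> exp T" by (simp add: T_def)
      moreover have nn: "0 \<le> \<beta> (exp \<tau> * b) * h (exp \<tau> * b) * b"
        using b beta_pos[of "exp \<tau> * b"] h_pos[of "exp \<tau> * b"] by auto
      ultimately have ineq: "exp \<tau> * (\<beta> (exp \<tau> * b) * h (exp \<tau> * b) * b) \<le> exp T * M"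
        using M_pos by (intro mult_mono) auto
      have eq: "g b = - ((exp \<tau> * (\<beta> (exp \<tau> * b) * h (exp \<tau> * b) * b)) * (1-b) powr (\<mu>-1))"
        unfolding g_def by (simp add: algebra_simps)
      have Xnn: "0 \<le> exp \<tau> * (\<beta> (exp \<tau> * b) * h (exp \<tau> * b) * b)" using nn by simp
      have "norm (g b) = (exp \<tau> * (\<beta> (exp \<tau> * b) * h (exp \<tau> * b) * b)) * (1-b) powr (\<mu>-1)"
        unfolding eq real_norm_def abs_minus_cancel using Xnn by (intro abs_of_nonneg) simp
      also have "\<dots> \<le> (exp T * M) * (1-b) powr (\<mu>-1)" by (rule mult_right_mono[OF ineq]) simp
      also have "\<dots> = H b" by (simp add: H_def algebra_simps)
      finally show ?thesis .
    qed
    have conv: "(\<lambda>k. f' k b) \<longlonglongrightarrow> g b" if b: "b \<in> {0..1}" for b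
    proof (cases "b \<in> E")
      case True thus ?thesis by (simp add: f'_def)
    next
      case False
      define y where "y = exp \<tau> * b"
      have y0: "0 \<le> y" using b by (simp add: y_def)
      have "y \<notin> D" using False unfolding E_def y_def by (auto simp: image_iff)
      hence cy: "continuous (at y within {0..}) \<beta>" using y0 by (auto simp: D_def)
      have hd: "(h has_real_derivative - \<beta> y * h y) (at ((\<lambda>t. exp t * b) \<tau>) within (\<lambda>t. exp t * b) ` UNIV)"
      proof -
        have sub: "(\<lambda>t. exp t * b) ` UNIV \<subseteq> {0..}" using b by auto
        have "(\<lambda>t. exp t * b) \<tau> = y" by (simp add: y_def mult.commute)
        thus ?thesis using has_field_derivative_subset[OF h_deriv[OF y0 cy] sub] by simp
      qed
      have ed: "((\<lambda>t. exp t * b) has_real_derivative exp \<tau> * b) (at \<tau>)"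
        by (auto intro!: derivative_eq_intros)
      have "((\<lambda>t. h (exp t * b)) has_real_derivative (- \<beta> y * h y) * (exp \<tau> * b)) (at \<tau>)"
        using DERIV_image_chain[OF hd ed] by (simp add: o_def)
      hence "((\<lambda>t. h (exp t * b)) has_real_derivative (- \<beta> y * h y) * (exp \<tau> * b)) (at \<tau> within {0..})"
        by (rule has_field_derivative_at_within)
      hence "((\<lambda>t. (h (exp t * b) - h (exp \<tau> * b)) / (t - \<tau>)) \<longlongrightarrow> (- \<beta> y * h y) * (exp \<tau> * b)) (at \<tau> within {0..})"
        by (simp add: has_field_derivative_iff)
      hence "((\<lambda>t. (h (exp t * b) - h (exp \<tau> * b)) / (t - \<tau>)) \<circ> X) \<longlonglongrightarrow> (- \<beta> y * h y) * (exp \<tau> * b)"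
        using X Xlim unfolding tendsto_at_iff_sequentially by blast
      hence "(\<lambda>k. (h (exp (X k) * b) - h (exp \<tau> * b)) / (X k - \<tau>) * (1-b) powr (\<mu>-1)) \<longlonglongrightarrow> (- \<beta> y * h y) * (exp \<tau> * b) * (1-b) powr (\<mu>-1)"
        by (intro tendsto_mult_right) (simp add: o_def)
      moreover have "(- \<beta> y * h y) * (exp \<tau> * b) * (1-b) powr (\<mu>-1) = g b"
        unfolding g_def y_def by (simp add: algebra_simps)
      moreover have "f' k b = (h (exp (X k) * b) - h (exp \<tau> * b)) / (X k - \<tau>) * (1-b) powr (\<mu>-1)" for k
        using False unfolding f'_def f_def by (simp add: algebra_simps diff_divide_distrib)
      ultimately show ?thesis by simp
    qed
    have "(\<lambda>k. integral {0..1} (f' k)) \<longlonglongrightarrow> integral {0..1} g"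
    proof (rule dominated_convergence(2)[OF f'_int H_int])
      show "norm (f' k b) \<le> H b" if "b \<in> {0..1}" for k b
        using bound_f[OF that] bound_g[OF that] by (simp add: f'_def)
    qed (use conv in auto)
    thus "((\<lambda>t. (I t - I \<tau>) / (t - \<tau>)) \<circ> X) \<longlonglongrightarrow> integral {0..1} g"
      by (simp add: f'_eq o_def)
  qed
  hence "(I has_real_derivative integral {0..1} g) (at \<tau> within {0..})"
    by (simp add: has_field_derivative_iff)
  thus ?thesis unfolding I_def intg .
qed

end



lemma Z:
  fixes F :: "real \<Rightarrow> real"
  assumes ab: "a \<le> b" and K: "countable K" and cont: "continuous_on {a..b} F"
    and der: "\<And>x. x \<in> {a<..<b} - K \<Longrightarrow> (F has_real_derivative 0) (at x)"
  shows "F b = F a"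
proof -
  define S where "S = {a<..<b} - K"
  define g :: "real^1 \<Rightarrow> real^1" where "g = (\<lambda>v. vec (F (v$1)))"
  define S' :: "(real^1) set" where "S' = (\<lambda>x. vec x) ` S"
  have "negligible (g ` S')"
  proof (rule baby_Sard)
    show "CARD(1) \<le> CARD(1)" by simp
    fix v assume "v \<in> S'"
    then obtain x where x: "x \<in> S" "v = vec x" unfolding S'_def by auto
    have d1: "((\<lambda>v::real^1. v$1) has_derivative (\<lambda>v. v$1)) (at v within S')"
      by (intro bounded_linear_imp_has_derivative bounded_linear_vec_nth)
    have d2: "(F has_derivative (\<lambda>h. 0)) (at (v$1))"
      using der[of x] x unfolding S_def has_field_derivative_def by (simp add: lambda_zero)
    have d3: "((\<lambda>y::real. vec y :: real^1) has_derivative (\<lambda>y. vec y)) (at (F (v$1)))"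
      by (intro bounded_linear_imp_has_derivative linear_conv_bounded_linear[THEN iffD1] linear_vec)
    have "((\<lambda>v. vec (F (v$1)) :: real^1) has_derivative (\<lambda>h. vec 0)) (at v within S')"
      using has_derivative_compose[OF has_derivative_compose[OF d1 d2] d3] by simp
    then show "(g has_derivative (\<lambda>h. 0)) (at v within S')"
      unfolding g_def by (simp add: vec_0)
  next
    fix v show "rank (matrix (\<lambda>h::real^1. 0::real^1)) < CARD(1)"
      by (simp add: rank_eq_0 matrix_def vec_eq_iff)
  qed
  have "g ` S' = (\<lambda>y. vec y) ` F ` S" unfolding g_def S'_def by (auto simp: image_image)
  have "negligible (F ` S)"
  proof -
    have "(\<lambda>v::real^1. v$1) ` (g ` S') = F ` S"
      unfolding g_def S'_def by (auto simp: image_image)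
    moreover have "negligible ((\<lambda>v::real^1. v$1) ` (g ` S'))"
      by (rule negligible_differentiable_image_negligible[OF _ \<open>negligible (g ` S')\<close>])
         (auto intro!: bounded_linear_imp_differentiable_on bounded_linear_vec_nth)
    ultimately show ?thesis by simp
  qed
  moreover have "negligible (F ` (K \<union> {a,b}))"
  proof -
    have "F ` (K \<union> {a,b}) = \<Union> ((\<lambda>y. {y}) ` F ` (K \<union> {a,b}))" by auto
    moreover have "negligible (\<Union> ((\<lambda>y. {y}) ` F ` (K \<union> {a,b})))"
      using K by (intro negligible_countable_Union) auto
    ultimately show ?thesis by simp
  qed
  moreover have "F ` {a..b} \<subseteq> F ` S \<union> F ` (K \<union> {a,b})"
  proof
    fix y assume "y \<in> F ` {a..b}"
    then obtain x where "x \<in> {a..b}" "y = F x" by auto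
    thus "y \<in> F ` S \<union> F ` (K \<union> {a,b})"
      by (cases "x \<in> S") (auto simp: S_def)
  qed
  ultimately have neg: "negligible (F ` {a..b})"
    using negligible_subset negligible_Un by metis
  show ?thesis
  proof (rule ccontr)
    assume ne: "F b \<noteq> F a"
    have conn: "connected (F ` {a..b})" by (intro connected_continuous_image cont) auto
    have "{min (F a) (F b)..max (F a) (F b)} \<subseteq> F ` {a..b}"
      using connected_contains_Icc[OF conn] ab by (auto simp: min_def max_def)
    hence "negligible {min (F a) (F b)..max (F a) (F b)}" using neg negligible_subset by blast
    thus False using ne negligible_interval(1)[of "min (F a) (F b)" "max (F a) (F b)"]
      by (auto simp: min_def max_def split: if_splits)
  qed
qed


lemma d_pow: assumes "x < 1"
  shows "((\<lambda>s::real. (1-s) powr a) has_real_derivative - (a * (1-x) powr (a-1))) (at x)"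
proof -
  have "((\<lambda>z. z powr a) has_real_derivative a * (1-x) powr (a-1)) (at ((\<lambda>s. 1 - s) x))"
    using has_real_derivative_powr[of "1-x" a] assms by simp
  moreover have "((\<lambda>s::real. 1 - s) has_real_derivative -1) (at x)"
    by (auto intro!: derivative_eq_intros)
  ultimately show ?thesis using DERIV_chain2[of "\<lambda>z. z powr a" _ "\<lambda>s. 1 - s"] by fastforce
qed

context prop2_setup begin

lemma isCont_h: "0 < y \<Longrightarrow> isCont h y"
proof -
  assume y: "0 < y"
  have "at y within {0..} = at y within UNIV"
    by (rule at_within_nhd[of _ "{0<..}"]) (use y in auto)
  moreover have "continuous (at y within {0..}) h" using h_cont y by (simp add: continuous_on_eq_continuous_within)
  ultimately show ?thesis by simp
qed

lemma identA:
  "integral {0..1} (\<lambda>b. exp \<tau> * \<beta> (exp \<tau> * b) * h (exp \<tau> * b) * (1-b) powr \<mu>)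
     = 1 - \<mu> * integral {0..1} (\<lambda>b. h (exp \<tau> * b) * (1-b) powr (\<mu>-1))"
proof -
  define J2f where "J2f b = exp \<tau> * \<beta> (exp \<tau> * b) * h (exp \<tau> * b) * (1-b) powr \<mu>" for b
  define If where "If b = h (exp \<tau> * b) * (1-b) powr (\<mu>-1)" for b
  define \<phi> where "\<phi> b = J2f b + \<mu> * If b" for b
  have J2_int: "J2f integrable_on {0..1}"
    using int_gen[where f="\<lambda>_. 1" and K=1 and a=\<mu> and \<tau>=\<tau>] mu0 unfolding J2f_def by simp
  have I_int: "If integrable_on {0..1}" unfolding If_def by (rule int_I)
  have mI: "(\<lambda>x. \<mu> * If x) integrable_on {0..1}" using I_int mu0 by simp
  have phi_int: "\<phi> integrable_on {0..1}" unfolding \<phi>_def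
    by (intro integrable_add J2_int mI)
  define \<Psi> where "\<Psi> x = integral {0..x} \<phi> + h (exp \<tau> * x) * (1-x) powr \<mu>" for x
  define K where "K = (\<lambda>y. y / exp \<tau>) ` D"
  have "\<Psi> 1 = \<Psi> 0"
  proof (rule Z[where F=\<Psi> and a=0 and b=1 and K=K])
    show "countable K" unfolding K_def using D_countable by simp
    show "continuous_on {0..1} \<Psi>" unfolding \<Psi>_def
    proof (intro continuous_on_add continuous_on_mult indefinite_integral_continuous_1 phi_int)
      show "continuous_on {0..1} (\<lambda>x. h (exp \<tau> * x))"
        by (rule continuous_on_compose2[OF h_cont]) (auto intro!: continuous_intros)
      show "continuous_on {0..1} (\<lambda>x. (1 - x) powr \<mu>)"
        by (intro continuous_on_powr' continuous_intros) (use mu0 in auto)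
    qed
  next
    fix x assume x: "x \<in> {0<..<1} - K"
    define y where "y = exp \<tau> * x"
    have y0: "0 < y" using x by (simp add: y_def)
    have "y \<notin> D" using x unfolding K_def y_def by (auto simp: image_iff)
    hence cy: "continuous (at y within {0..}) \<beta>" using y0 by (auto simp: D_def)
    have aty: "at y within {0..} = at y within UNIV"
      by (rule at_within_nhd[of _ "{0<..}"]) (use y0 in auto)
    have cbeta: "isCont \<beta> y" using cy aty by (simp add: continuous_within)
    have hd: "(h has_real_derivative - \<beta> y * h y) (at y)"
      using h_deriv[OF less_imp_le[OF y0] cy] aty by simp
    have cb: "isCont (\<lambda>b. \<beta> (exp \<tau> * b)) x"
      by (rule isCont_o2[where f="\<lambda>b. exp \<tau> * b", OF _ cbeta[unfolded y_def]]) (auto intro!: continuous_intros)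
    have ch: "isCont (\<lambda>b. h (exp \<tau> * b)) x"
      by (rule isCont_o2[where f="\<lambda>b. exp \<tau> * b", OF _ isCont_h[OF y0[unfolded y_def]]]) (auto intro!: continuous_intros)
    have cphi: "isCont \<phi> x" unfolding \<phi>_def J2f_def If_def
      using x by (intro continuous_intros cb ch) auto
    have "((\<lambda>u. integral {0..u} \<phi>) has_vector_derivative \<phi> x) (at x within {0..1} - {})"
      using x cphi by (intro integral_has_vector_derivative_continuous_at phi_int)
                      (auto intro: continuous_at_imp_continuous_within)
    hence d1: "((\<lambda>u. integral {0..u} \<phi>) has_real_derivative \<phi> x) (at x)"
      using x by (simp add: has_real_derivative_iff_has_vector_derivative at_within_Icc_at)
    have ed: "((\<lambda>s. exp \<tau> * s) has_real_derivative exp \<tau>) (at x)"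
      by (auto intro!: derivative_eq_intros)
    have d2: "((\<lambda>s. h (exp \<tau> * s)) has_real_derivative (- \<beta> y * h y) * exp \<tau>) (at x)"
      using DERIV_chain2[OF hd[unfolded y_def] ed] by (simp add: y_def)
    have d3: "((\<lambda>s. (1-s) powr \<mu>) has_real_derivative - (\<mu> * (1-x) powr (\<mu>-1))) (at x)"
      using x by (intro d_pow) auto
    have "(\<Psi> has_real_derivative \<phi> x + ((- \<beta> y * h y) * exp \<tau> * (1-x) powr \<mu> + - (\<mu> * (1-x) powr (\<mu>-1)) * h (exp \<tau> * x))) (at x)"
      unfolding \<Psi>_def by (intro DERIV_add d1 DERIV_mult d2 d3)
    moreover have "\<phi> x + ((- \<beta> y * h y) * exp \<tau> * (1-x) powr \<mu> + - (\<mu> * (1-x) powr (\<mu>-1)) * h (exp \<tau> * x)) = 0"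
      unfolding \<phi>_def J2f_def If_def y_def by (simp add: algebra_simps)
    ultimately show "(\<Psi> has_real_derivative 0) (at x)" by simp
  qed simp
  moreover have "\<Psi> 0 = 1" unfolding \<Psi>_def using h0 by simp
  moreover have "\<Psi> 1 = integral {0..1} \<phi>" unfolding \<Psi>_def using mu0 by simp
  moreover have "integral {0..1} \<phi> = integral {0..1} J2f + \<mu> * integral {0..1} If"
    unfolding \<phi>_def by (simp add: integral_add J2_int mI)
  ultimately show ?thesis unfolding J2f_def If_def by simp
qed

end



context prop2_setup begin

definition I where "I t = integral {0..1} (\<lambda>b. h (exp t * b) * (1-b) powr (\<mu>-1))"
definition J1 where "J1 t = integral {0..1} (\<lambda>b. exp t * \<beta> (exp t * b) * h (exp t * b) * b * (1-b) powr (\<mu>-1))"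
definition J where "J t = integral {0..1} (\<lambda>b. exp t * \<beta> (exp t * b) * h (exp t * b) * (1-b) powr (\<mu>-1))"
definition Cd where "Cd t = J1 t * (C t)\<^sup>2"

lemma W_eq: "0 \<le> t \<Longrightarrow> 0 \<le> b \<Longrightarrow> b < 1 \<Longrightarrow> W t b = C t * h (exp t * b) * (1-b) powr (\<mu>-1)"
  using W_def by (simp add: h_def)

lemma CI: assumes t: "0 \<le> t" shows "C t * I t = 1"
proof -
  have "integral {0..1} (W t) = 1" using C_norm[OF t] by (simp add: integral_unique)
  moreover have "integral {0..1} (W t) = integral {0..1} (\<lambda>b. C t * (h (exp t * b) * (1-b) powr (\<mu>-1)))"
    by (rule integral_spike[where S="{1}"]) (use t in \<open>auto simp: W_eq\<close>)
  moreover have "\<dots> = C t * I t" unfolding I_def by simp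
  ultimately show ?thesis by simp
qed

lemma I_pos: assumes "0 \<le> t" shows "0 < I t"
  using CI[OF assms] C_pos[OF assms] by (metis zero_less_mult_iff zero_less_one not_less_iff_gr_or_eq)

lemma C_inv: "0 \<le> t \<Longrightarrow> C t = 1 / I t"
  using CI[of t] I_pos[of t] by (simp add: field_simps)

lemma C_deriv: assumes tau: "0 \<le> \<tau>" shows "(C has_real_derivative Cd \<tau>) (at \<tau> within {0..})"
proof -
  have dI: "(I has_real_derivative - J1 \<tau>) (at \<tau> within {0..})"
    using I_deriv[OF tau] unfolding I_def[abs_def] J1_def .
  have "((\<lambda>t. 1 / I t) has_real_derivative - (- J1 \<tau>) / (I \<tau>)\<^sup>2) (at \<tau> within {0..})"
    using DERIV_inverse_fun[OF dI] I_pos[OF tau] by (simp add: divide_inverse power2_eq_square)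
  moreover have "- (- J1 \<tau>) / (I \<tau>)\<^sup>2 = Cd \<tau>"
    unfolding Cd_def C_inv[OF tau] using I_pos[OF tau] by (simp add: field_simps power2_eq_square)
  ultimately have "((\<lambda>t. 1 / I t) has_real_derivative Cd \<tau>) (at \<tau> within {0..})" by simp
  thus ?thesis
    by (rule has_field_derivative_transform_within[where d=1]) (use tau C_inv in auto)
qed

lemma hchain: assumes "0 \<le> b" and y0: "0 \<le> exp \<tau> * b" and cy: "continuous (at (exp \<tau> * b) within {0..}) \<beta>"
  shows "((\<lambda>t. h (exp t * b)) has_real_derivative (- \<beta> (exp \<tau> * b) * h (exp \<tau> * b)) * (exp \<tau> * b)) (at \<tau> within S)"
proof -
  have sub: "(\<lambda>t. exp t * b) ` UNIV \<subseteq> {0..}" using assms by auto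
  have "(\<lambda>t. exp t * b) \<tau> = exp \<tau> * b" by (simp add: mult.commute)
  hence hd: "(h has_real_derivative - \<beta> (exp \<tau> * b) * h (exp \<tau> * b)) (at ((\<lambda>t. exp t * b) \<tau>) within (\<lambda>t. exp t * b) ` UNIV)"
    using has_field_derivative_subset[OF h_deriv[OF y0 cy] sub] by simp
  have ed: "((\<lambda>t. exp t * b) has_real_derivative exp \<tau> * b) (at \<tau>)"
    by (auto intro!: derivative_eq_intros)
  have "((\<lambda>t. h (exp t * b)) has_real_derivative (- \<beta> (exp \<tau> * b) * h (exp \<tau> * b)) * (exp \<tau> * b)) (at \<tau>)"
    using DERIV_image_chain[OF hd ed] by (simp add: o_def)
  thus ?thesis by (rule has_field_derivative_at_within)
qed

lemma alg: fixes c d hh bb e pp bv b :: real assumes "c \<noteq> 0"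
  shows "(d * hh + (- bv * hh) * (e * b) * c) * pp + c * ((- bv * hh) * e * ((1-b) * pp) + - (\<mu> * pp) * hh)
     + e * bv * (c * hh * pp) = (c * hh * pp) * c * (d / c\<^sup>2 - \<mu> / c)"
  using assms by (simp add: field_simps power2_eq_square)

lemma pde:
  assumes tau: "0 \<le> \<tau>" and b: "0 \<le> b" "b < 1" and cy: "continuous (at (exp \<tau> * b) within {0..}) \<beta>"
  shows "\<exists>Wt Wb. ((\<lambda>t. W t b) has_real_derivative Wt) (at \<tau> within {0..}) \<and>
                   ((\<lambda>s. (1 - s) * W \<tau> s) has_real_derivative Wb) (at b within {0..<1}) \<and>
                   Wt + Wb + exp \<tau> * \<beta> (exp \<tau> * b) * W \<tau> b = W \<tau> b * C \<tau> * (Cd \<tau> / (C \<tau>)\<^sup>2 - \<mu> / C \<tau>)"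
proof -
  define y where "y = exp \<tau> * b"
  define p where "p = (1-b) powr (\<mu>-1)"
  have y0: "0 \<le> y" using b by (simp add: y_def)
  have dt: "((\<lambda>t. h (exp t * b)) has_real_derivative (- \<beta> y * h y) * (exp \<tau> * b)) (at \<tau> within {0..})"
    using hchain[OF b(1) _ cy] b unfolding y_def by simp
  have "((\<lambda>t. C t * h (exp t * b) * p) has_real_derivative (Cd \<tau> * h y + (- \<beta> y * h y) * (exp \<tau> * b) * C \<tau>) * p) (at \<tau> within {0..})"
    unfolding y_def by (intro DERIV_cmult_right DERIV_mult C_deriv[OF tau] dt[unfolded y_def])
  hence Wt: "((\<lambda>t. W t b) has_real_derivative (Cd \<tau> * h y + (- \<beta> y * h y) * (exp \<tau> * b) * C \<tau>) * p) (at \<tau> within {0..})"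
    by (rule has_field_derivative_transform_within[where d=1]) (use tau b in \<open>auto simp: W_eq p_def y_def\<close>)
  have sub: "(\<lambda>s. exp \<tau> * s) ` {0..<1} \<subseteq> {0..}" by auto
  have hd: "(h has_real_derivative - \<beta> y * h y) (at ((\<lambda>s. exp \<tau> * s) b) within (\<lambda>s. exp \<tau> * s) ` {0..<1})"
    using has_field_derivative_subset[OF h_deriv[OF y0 cy[folded y_def]] sub] by (simp add: y_def)
  have ed: "((\<lambda>s. exp \<tau> * s) has_real_derivative exp \<tau>) (at b within {0..<1})"
    by (auto intro!: derivative_eq_intros)
  have ds: "((\<lambda>s. h (exp \<tau> * s)) has_real_derivative (- \<beta> y * h y) * exp \<tau>) (at b within {0..<1})"
    using DERIV_image_chain[OF hd ed] by (simp add: o_def)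
  have dp: "((\<lambda>s. (1-s) powr \<mu>) has_real_derivative - (\<mu> * (1-b) powr (\<mu>-1))) (at b within {0..<1})"
    using d_pow[OF b(2)] by (rule has_field_derivative_at_within)
  have "((\<lambda>s. C \<tau> * (h (exp \<tau> * s) * (1-s) powr \<mu>)) has_real_derivative
          C \<tau> * ((- \<beta> y * h y) * exp \<tau> * (1-b) powr \<mu> + - (\<mu> * (1-b) powr (\<mu>-1)) * h (exp \<tau> * b))) (at b within {0..<1})"
    by (intro DERIV_cmult DERIV_mult ds dp)
  hence Wb: "((\<lambda>s. (1 - s) * W \<tau> s) has_real_derivative
          C \<tau> * ((- \<beta> y * h y) * exp \<tau> * (1-b) powr \<mu> + - (\<mu> * (1-b) powr (\<mu>-1)) * h (exp \<tau> * b))) (at b within {0..<1})"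
  proof (rule has_field_derivative_transform_within[where d=1])
    fix s :: real assume s: "s \<in> {0..<1}"
    have pw: "(1 - s) * (1-s) powr (\<mu>-1) = (1-s) powr \<mu>" using s by (simp add: powr_mult_base)
    have e1: "W \<tau> s = C \<tau> * h (exp \<tau> * s) * (1-s) powr (\<mu>-1)" using W_eq tau s by simp
    have "(1-s) * W \<tau> s = C \<tau> * (h (exp \<tau> * s) * ((1 - s) * (1-s) powr (\<mu>-1)))"
      unfolding e1 by (simp only: ac_simps)
    thus "C \<tau> * (h (exp \<tau> * s) * (1-s) powr \<mu>) = (1 - s) * W \<tau> s" unfolding pw by simp
  qed (use b in auto)
  have q: "(1-b) powr \<mu> = (1-b) * p" unfolding p_def using b by (simp add: powr_mult_base)
  have Wtb: "W \<tau> b = C \<tau> * h y * p" using W_eq[OF tau b] by (simp add: y_def p_def)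
  have Cne: "C \<tau> \<noteq> 0" using C_pos[OF tau] by simp
  show ?thesis
  proof (intro exI conjI)
    show "((\<lambda>t. W t b) has_real_derivative (Cd \<tau> * h y + (- \<beta> y * h y) * (exp \<tau> * b) * C \<tau>) * p) (at \<tau> within {0..})" by (rule Wt)
    show "((\<lambda>s. (1 - s) * W \<tau> s) has_real_derivative
          C \<tau> * ((- \<beta> y * h y) * exp \<tau> * (1-b) powr \<mu> + - (\<mu> * (1-b) powr (\<mu>-1)) * h (exp \<tau> * b))) (at b within {0..<1})" by (rule Wb)
    show "(Cd \<tau> * h y + (- \<beta> y * h y) * (exp \<tau> * b) * C \<tau>) * p +
          C \<tau> * ((- \<beta> y * h y) * exp \<tau> * (1-b) powr \<mu> + - (\<mu> * (1-b) powr (\<mu>-1)) * h (exp \<tau> * b)) +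
          exp \<tau> * \<beta> (exp \<tau> * b) * W \<tau> b = W \<tau> b * C \<tau> * (Cd \<tau> / (C \<tau>)\<^sup>2 - \<mu> / C \<tau>)"
      unfolding Wtb q p_def[symmetric]
      using alg[OF Cne, where d="Cd \<tau>" and hh="h y" and bv="\<beta> y" and e="exp \<tau>" and pp=p and b=b]
      by (simp add: y_def)
  qed
qed

end



context prop2_setup begin

lemma part2:
  assumes tau: "0 \<le> \<tau>"
  shows "(\<lambda>b. exp \<tau> * \<beta> (exp \<tau> * b) * W \<tau> b) integrable_on {0..1} \<and>
         W \<tau> 0 * (1 + (Cd \<tau> / (C \<tau>)\<^sup>2 - \<mu> / C \<tau>)) = integral {0..1} (\<lambda>b. exp \<tau> * \<beta> (exp \<tau> * b) * W \<tau> b)"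
proof -
  define Jf where "Jf b = exp \<tau> * \<beta> (exp \<tau> * b) * h (exp \<tau> * b) * (1-b) powr (\<mu>-1)" for b
  define J1f where "J1f b = exp \<tau> * \<beta> (exp \<tau> * b) * h (exp \<tau> * b) * b * (1-b) powr (\<mu>-1)" for b
  define J2f where "J2f b = exp \<tau> * \<beta> (exp \<tau> * b) * h (exp \<tau> * b) * (1-b) powr \<mu>" for b
  have J_int: "Jf integrable_on {0..1}"
    using int_gen[where f="\<lambda>_. 1" and K=1 and a="\<mu>-1" and \<tau>=\<tau>] mu0 unfolding Jf_def by simp
  have J1_int: "J1f integrable_on {0..1}"
    using int_gen[where f="\<lambda>b. b" and K=1 and a="\<mu>-1" and \<tau>=\<tau>] mu0 id_meas unfolding J1f_def by simp
  have J2_int: "J2f integrable_on {0..1}"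
    using int_gen[where f="\<lambda>_. 1" and K=1 and a="\<mu>" and \<tau>=\<tau>] mu0 unfolding J2f_def by simp
  have eqW: "exp \<tau> * \<beta> (exp \<tau> * b) * W \<tau> b = C \<tau> * Jf b" if "b \<in> {0..1} - {1}" for b
    using that tau by (simp add: W_eq Jf_def)
  have CJ_int: "(\<lambda>b. C \<tau> * Jf b) integrable_on {0..1}" using J_int C_pos[OF tau] by simp
  have int1: "(\<lambda>b. exp \<tau> * \<beta> (exp \<tau> * b) * W \<tau> b) integrable_on {0..1}"
    by (rule integrable_spike[OF CJ_int, where S="{1}"]) (use eqW in auto)
  have intval: "integral {0..1} (\<lambda>b. exp \<tau> * \<beta> (exp \<tau> * b) * W \<tau> b) = C \<tau> * integral {0..1} Jf"
  proof -
    have "integral {0..1} (\<lambda>b. exp \<tau> * \<beta> (exp \<tau> * b) * W \<tau> b) = integral {0..1} (\<lambda>b. C \<tau> * Jf b)"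
      by (rule integral_spike[where S="{1}"]) (use eqW in auto)
    thus ?thesis by simp
  qed
  have diff: "integral {0..1} Jf - integral {0..1} J1f = integral {0..1} J2f"
  proof -
    have "integral {0..1} Jf - integral {0..1} J1f = integral {0..1} (\<lambda>b. Jf b - J1f b)"
      by (rule integral_diff[symmetric]) (use J_int J1_int in auto)
    also have "\<dots> = integral {0..1} J2f"
    proof (rule integral_cong)
      fix b :: real assume b: "b \<in> {0..1}"
      show "Jf b - J1f b = J2f b"
      proof (cases "b = 1")
        case True thus ?thesis by (simp add: Jf_def J1f_def J2f_def)
      next
        case False
        hence "(1-b) * (1-b) powr (\<mu>-1) = (1-b) powr \<mu>" using b by (simp add: powr_mult_base)
        moreover have "Jf b - J1f b = exp \<tau> * \<beta> (exp \<tau> * b) * h (exp \<tau> * b) * ((1-b) * (1-b) powr (\<mu>-1))"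
          unfolding Jf_def J1f_def by (simp add: algebra_simps)
        ultimately show ?thesis unfolding J2f_def by simp
      qed
    qed
    finally show ?thesis .
  qed
  have A: "integral {0..1} J2f = 1 - \<mu> * I \<tau>" unfolding J2f_def I_def by (rule identA)
  have W0: "W \<tau> 0 = C \<tau>" using W_eq[OF tau, of 0] h0 by simp
  have Cne: "C \<tau> \<noteq> 0" using C_pos[OF tau] by simp
  have delta: "Cd \<tau> / (C \<tau>)\<^sup>2 - \<mu> / C \<tau> = J1 \<tau> - \<mu> * I \<tau>"
    unfolding Cd_def using Cne C_inv[OF tau] by (simp add: power2_eq_square)
  have "J1 \<tau> = integral {0..1} J1f" unfolding J1_def J1f_def ..
  hence "W \<tau> 0 * (1 + (Cd \<tau> / (C \<tau>)\<^sup>2 - \<mu> / C \<tau>)) = C \<tau> * integral {0..1} Jf"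
    unfolding W0 delta using diff A by simp
  thus ?thesis using int1 intval by simp
qed

end

theorem proposition2:
  fixes \<mu> :: real and \<beta> B C :: "real \<Rightarrow> real" and W :: "real \<Rightarrow> real \<Rightarrow> real"
  assumes mu: "0 < \<mu>" "\<mu> < 1"
    and beta_pos: "\<And>a. 0 \<le> a \<Longrightarrow> 0 < \<beta> a"
    and beta_bdd: "\<exists>M. \<forall>a\<ge>0. \<beta> a \<le> M"
    and beta_noninc: "\<And>x y. 0 \<le> x \<Longrightarrow> x \<le> y \<Longrightarrow> \<beta> y \<le> \<beta> x"
    and beta_lim: "((\<lambda>a. a * \<beta> a) \<longlongrightarrow> \<mu>) at_top"
    and B_def: "\<And>a. 0 \<le> a \<Longrightarrow> B a = integral {0..a} \<beta>"
    and W_def: "\<And>\<tau> b. 0 \<le> \<tau> \<Longrightarrow> 0 \<le> b \<Longrightarrow> b < 1 \<Longrightarrow>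
                  W \<tau> b = C \<tau> * exp (- B (exp \<tau> * b)) * (1 - b) powr (\<mu> - 1)"
    and C_pos: "\<And>\<tau>. 0 \<le> \<tau> \<Longrightarrow> 0 < C \<tau>"
    and C_norm: "\<And>\<tau>. 0 \<le> \<tau> \<Longrightarrow> ((\<lambda>b. W \<tau> b) has_integral 1) {0..1}"
  shows "\<exists>C'. (\<forall>\<tau>\<ge>0. (C has_real_derivative C' \<tau>) (at \<tau> within {0..})) \<and>
     (let \<delta> = (\<lambda>\<tau>. C' \<tau> / (C \<tau>)\<^sup>2 - \<mu> / C \<tau>) in
       (\<forall>\<tau> b. 0 \<le> \<tau> \<longrightarrow> 0 \<le> b \<longrightarrow> b < 1 \<longrightarrow>
          continuous (at (exp \<tau> * b) within {0..}) \<beta> \<longrightarrow>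
          (\<exists>Wt Wb. ((\<lambda>t. W t b) has_real_derivative Wt) (at \<tau> within {0..}) \<and>
                   ((\<lambda>s. (1 - s) * W \<tau> s) has_real_derivative Wb) (at b within {0..<1}) \<and>
                   Wt + Wb + exp \<tau> * \<beta> (exp \<tau> * b) * W \<tau> b = W \<tau> b * C \<tau> * \<delta> \<tau>)) \<and>
       (\<forall>\<tau>\<ge>0. (\<lambda>b. exp \<tau> * \<beta> (exp \<tau> * b) * W \<tau> b) integrable_on {0..1} \<and>
          W \<tau> 0 * (1 + \<delta> \<tau>) = integral {0..1} (\<lambda>b. exp \<tau> * \<beta> (exp \<tau> * b) * W \<tau> b)))"
proof -
  obtain M where M: "\<forall>a\<ge>0. \<beta> a \<le> M" using beta_bdd by blast
  interpret P: prop2_setup \<mu> M \<beta> B C W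
    using mu beta_pos M beta_noninc B_def W_def C_pos C_norm by unfold_locales auto
  show ?thesis
  proof (rule exI[of _ P.Cd], intro conjI allI impI)
    show "(C has_real_derivative P.Cd \<tau>) (at \<tau> within {0..})" if "0 \<le> \<tau>" for \<tau>
      using P.C_deriv[OF that] .
    show "let \<delta> = (\<lambda>\<tau>. P.Cd \<tau> / (C \<tau>)\<^sup>2 - \<mu> / C \<tau>) in
       (\<forall>\<tau> b. 0 \<le> \<tau> \<longrightarrow> 0 \<le> b \<longrightarrow> b < 1 \<longrightarrow>
          continuous (at (exp \<tau> * b) within {0..}) \<beta> \<longrightarrow>
          (\<exists>Wt Wb. ((\<lambda>t. W t b) has_real_derivative Wt) (at \<tau> within {0..}) \<and>
                   ((\<lambda>s. (1 - s) * W \<tau> s) has_real_derivative Wb) (at b within {0..<1}) \<and>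
                   Wt + Wb + exp \<tau> * \<beta> (exp \<tau> * b) * W \<tau> b = W \<tau> b * C \<tau> * \<delta> \<tau>)) \<and>
       (\<forall>\<tau>\<ge>0. (\<lambda>b. exp \<tau> * \<beta> (exp \<tau> * b) * W \<tau> b) integrable_on {0..1} \<and>
          W \<tau> 0 * (1 + \<delta> \<tau>) = integral {0..1} (\<lambda>b. exp \<tau> * \<beta> (exp \<tau> * b) * W \<tau> b))"
      unfolding Let_def using P.pde P.part2 by blast
  qed
qed


end
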